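(* Suppose Assumptions (A1) and (A2) below hold, and let $\{\boldsymbol{x}_{i,t}\}$ be the decision sequence generated by Algorithm DOMFW (described in the context) with parameters $0<\alpha_t\le 1$ and a nondecreasing integer sequence $\{K_t\}$. Then for any $T\ge 2$ and $K_t\ge 2$ (for all $t$), $$\sum_{t=1}^T\sum_{i=1}^n \|\boldsymbol{x}_{i,t}-\boldsymbol{x}_{avg,t}\| \le \frac{n\Gamma_1}{1-\sigma_1^{K_1}}\sum_{i=1}^n\|\boldsymbol{x}_{i,1}\| + \sum_{i=1}^n\|\boldsymbol{x}_{i,1}-\boldsymbol{x}_{avg,1}\| + \left(\frac{n^2M\Gamma_1}{\sigma_1(1-\sigma_1)(1-\sigma_1^{K_1})}+2nM\right)\sum_{t=1}^T\alpha_t .$$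
   Context: Network: $n$ agents, $\mathcal{V}=\{1,\dots,n\}$, time-varying directed graphs $\mathcal{G}_t=(\mathcal{V},\mathcal{E}_t,A_t)$ with weight matrices $A_t\in\mathbb{R}^{n\times n}$; $\mathcal{N}_i^{in}(t)=\{j:(j,i)\in\mathcal{E}_t\}\cup\{i\}$, and $[A_t]_{ij}>0$ if $j\in\mathcal{N}_i^{in}(t)$, $[A_t]_{ij}=0$ otherwise. Assumption (A1): (a) there is $\zeta>0$ with $[A_t]_{ij}>\zeta$ whenever $[A_t]_{ij}>0$; (b) $\mathcal{G}_t$ is strongly connected for all $t$; (c) each $A_t$ is doubly stochastic. Assumption (A2): $\boldsymbol{X}\subset\mathbb{R}^d$ is convex compact with $\|\boldsymbol{x}-\boldsymbol{z}\|\le M$ for all $\boldsymbol{x},\boldsymbol{z}\in\boldsymbol{X}$. Each agent $i$ has at round $t$ a convex differentiable loss $f_{i,t}$ on $\boldsymbol{X}$. Algorithm DOMFW: initial points $\boldsymbol{x}_{i,1}\in\boldsymbol{X}$. For $t=1,\dots,T$: set $\boldsymbol{x}_{i,t}^1=\boldsymbol{x}_{i,t}$; for $k=1,\dots,K_t$, each agent $i$ computes $\hat{\boldsymbol{x}}_{i,t}^k=\sum_{j}[A_t]_{ij}\boldsymbol{x}_{j,t}^k$; $\overline{\nabla}f_{i,t}^1=\nabla f_{i,t}(\hat{\boldsymbol{x}}_{i,t}^1)$ and for $k\ge2$, $\overline{\nabla}f_{i,t}^k=\widehat{\nabla}f_{i,t}^{k-1}+\nabla f_{i,t}(\hat{\boldsymbol{x}}_{i,t}^k)-\nabla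 f_{i,t}(\hat{\boldsymbol{x}}_{i,t}^{k-1})$; $\widehat{\nabla}f_{i,t}^k=\sum_j[A_t]_{ij}\overline{\nabla}f_{j,t}^k$; $\boldsymbol{v}_{i,t}^k\in\arg\min_{\boldsymbol{x}\in\boldsymbol{X}}\langle\boldsymbol{x},\widehat{\nabla}f_{i,t}^k\rangle$; $\boldsymbol{x}_{i,t}^{k+1}=\hat{\boldsymbol{x}}_{i,t}^k+\alpha_t(\boldsymbol{v}_{i,t}^k-\hat{\boldsymbol{x}}_{i,t}^k)$. Then $\boldsymbol{x}_{i,t+1}=\boldsymbol{x}_{i,t}^{K_t+1}$. Notation: $\boldsymbol{x}_{avg,t}=\frac1n\sum_i\boldsymbol{x}_{i,t}$; $\sigma_1=1-\frac{\zeta}{4n^2}$, $\Gamma_1=\left(1-\frac{\zeta}{4n^2}\right)^{-1}$. *)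

theory Defs
  imports "HOL-Analysis.Analysis"
begin

text \<open>Agents are indexed by 0,...,n-1. Weight matrices are A t i j = [A_t]_{ij}.\<close>

definition in_neighbors :: "nat \<Rightarrow> (nat \<Rightarrow> nat \<Rightarrow> real) \<Rightarrow> nat \<Rightarrow> nat set" where
  "in_neighbors n W i = {j. j < n \<and> j \<noteq> i \<and> W i j > 0} \<union> {i}"

definition graph_edges :: "nat \<Rightarrow> (nat \<Rightarrow> nat \<Rightarrow> real) \<Rightarrow> (nat \<times> nat) set" where
  "graph_edges n W = {(j, i). j < n \<and> i < n \<and> j \<noteq> i \<and> W i j > 0}"

definition strongly_connected_graph :: "nat \<Rightarrow> (nat \<Rightarrow> nat \<Rightarrow> real) \<Rightarrow> bool" where
  "strongly_connected_graph n W \<longleftrightarrow> (\<forall>i<n. \<forall>j<n. (i, j) \<in> (graph_edges n W)\<^sup>*)"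

definition weights_on_graph :: "nat \<Rightarrow> (nat \<Rightarrow> nat \<Rightarrow> real) \<Rightarrow> bool" where
  "weights_on_graph n W \<longleftrightarrow>
     (\<forall>i<n. \<forall>j<n. (j \<in> in_neighbors n W i \<longrightarrow> W i j > 0) \<and>
                  (j \<notin> in_neighbors n W i \<longrightarrow> W i j = 0))"

definition doubly_stochastic :: "nat \<Rightarrow> (nat \<Rightarrow> nat \<Rightarrow> real) \<Rightarrow> bool" where
  "doubly_stochastic n W \<longleftrightarrow>
     (\<forall>i<n. \<forall>j<n. W i j \<ge> 0) \<and>
     (\<forall>i<n. (\<Sum>j<n. W i j) = 1) \<and>
     (\<forall>j<n. (\<Sum>i<n. W i j) = 1)"

definition sigma1 :: "nat \<Rightarrow> real \<Rightarrow> real" where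
  "sigma1 n \<zeta> = 1 - \<zeta> / (4 * (real n)\<^sup>2)"

definition Gamma1 :: "nat \<Rightarrow> real \<Rightarrow> real" where
  "Gamma1 n \<zeta> = inverse (1 - \<zeta> / (4 * (real n)\<^sup>2))"

definition xavg :: "nat \<Rightarrow> (nat \<Rightarrow> 'a::real_vector) \<Rightarrow> 'a" where
  "xavg n x = (1 / real n) *\<^sub>R (\<Sum>i<n. x i)"

end

theory Submission
  imports Defs
begin

definition Qf :: "nat set \<Rightarrow> (nat \<Rightarrow> nat \<Rightarrow> real) \<Rightarrow> (nat \<Rightarrow> real) \<Rightarrow> real" where
  "Qf I w y = (\<Sum>j\<in>I. \<Sum>l\<in>I. w j l * (y j - y l)^2)"

lemma Qf_nonneg: "(\<And>j l. j \<in> I \<Longrightarrow> l \<in> I \<Longrightarrow> 0 \<le> w j l) \<Longrightarrow> 0 \<le> Qf I w y"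
  unfolding Qf_def by (intro sum_nonneg) auto

lemma spread_aux:
  assumes fin: "finite I" and ne: "I \<noteq> {}"
    and wnn: "\<And>j l. j \<in> I \<Longrightarrow> l \<in> I \<Longrightarrow> 0 \<le> w j l"
    and cut: "\<And>S. S \<subseteq> I \<Longrightarrow> S \<noteq> {} \<Longrightarrow> S \<noteq> I \<Longrightarrow> \<eta> \<le> (\<Sum>j\<in>S. \<Sum>l\<in>I-S. w j l)"
    and eta: "0 \<le> \<eta>"
  shows "card (y ` I) \<le> Suc k \<Longrightarrow> 2*\<eta>*(Max (y`I) - Min (y`I))^2 \<le> real k * Qf I w y"
proof (induction k arbitrary: y)
  case 0
  have "card (y ` I) \<noteq> 0" using fin ne by simp
  then have "card (y ` I) = 1" using 0 by linarith
  then obtain c where "y ` I = {c}" by (meson card_1_singletonE)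
  then show ?case by simp
next
  case (Suc k)
  have Q0: "0 \<le> Qf I w y" by (rule Qf_nonneg[OF wnn])
  show ?case
  proof (cases "card (y ` I) \<le> Suc k")
    case True
    have "real k * Qf I w y \<le> real (Suc k) * Qf I w y" by (intro mult_right_mono) (simp_all add: Q0)
    with Suc.IH[OF True] show ?thesis by linarith
  next
    case False
    then have cardY: "card (y ` I) = Suc (Suc k)" using Suc.prems by linarith
    define Y where "Y = y ` I"
    have finY: "finite Y" "Y \<noteq> {}" using fin ne by (auto simp: Y_def)
    define u where "u = Max Y"
    have uY: "u \<in> Y" using finY by (simp add: u_def)
    have yle: "\<And>j. j \<in> I \<Longrightarrow> y j \<le> u" using finY by (auto simp: u_def Y_def)
    define R where "R = Y - {u}"
    have cardR: "card R = Suc k" using cardY uY finY by (simp add: R_def Y_def)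
    have finR1: "finite R" using finY by (simp add: R_def)
    have finR: "finite R" "R \<noteq> {}" using finR1 cardR by auto
    define u' where "u' = Max R"
    have u'R: "u' \<in> R" using finR by (simp add: u'_def)
    have ltu: "u' < u" using u'R uY finY yle by (auto simp: R_def Y_def less_le)
    define S where "S = {j\<in>I. y j = u}"
    have SI: "S \<subseteq> I" by (auto simp: S_def)
    have Sne: "S \<noteq> {}" using uY by (auto simp: S_def Y_def)
    have notS: "\<And>j. j \<in> I \<Longrightarrow> j \<notin> S \<Longrightarrow> y j \<le> u'"
      using finR by (auto simp: S_def u'_def R_def Y_def)
    have ISne: "I - S \<noteq> {}" using u'R by (auto simp: S_def R_def Y_def)
    have SnI: "S \<noteq> I" using ISne by auto
    define y' where "y' = (\<lambda>i. min (y i) u')"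
    have y'I: "y' ` I = R"
    proof
      show "y' ` I \<subseteq> R"
      proof
        fix v assume "v \<in> y' ` I"
        then obtain j where j: "j \<in> I" "v = y' j" by auto
        show "v \<in> R"
        proof (cases "j \<in> S")
          case True
          then have "v = u'" using j ltu by (auto simp: y'_def S_def)
          then show ?thesis using u'R by simp
        next
          case False
          then have "v = y j" using j notS by (auto simp: y'_def)
          then show ?thesis using False j by (auto simp: R_def Y_def S_def)
        qed
      qed
    next
      show "R \<subseteq> y' ` I"
      proof
        fix v assume "v \<in> R"
        then obtain j where j: "j \<in> I" "v = y j" "j \<notin> S" by (auto simp: R_def Y_def S_def)
        then have "y' j = v" using notS by (auto simp: y'_def)
        then show "v \<in> y' ` I" using j(1) by (metis image_eqI)
      qed
    qed
    have IH: "2*\<eta>*(Max R - Min R)^2 \<le> real k * Qf I w y'"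
      using Suc.IH[of y'] y'I cardR by simp
    have minY: "Min Y = Min R"
    proof -
      have "Min R \<in> R" using finR by simp
      then have "Min R \<in> Y" by (simp add: R_def)
      then have a: "Min Y \<le> Min R" using finY by simp
      have "Min Y \<le> u'" using finY u'R by (auto simp: R_def)
      then have "Min Y \<in> R" using ltu finY by (auto simp: R_def)
      then have "Min R \<le> Min Y" using finR by simp
      with a show ?thesis by simp
    qed
    define g where "g = u - u'"
    define d where "d = u' - Min R"
    have g0: "g > 0" using ltu by (simp add: g_def)
    have d0: "d \<ge> 0" using finR u'R by (simp add: d_def u'_def)
    have D: "Max (y ` I) - Min (y ` I) = g + d"
      using minY by (simp add: Y_def[symmetric] u_def[symmetric] g_def d_def)
    have termw: "w j l * (y j - y l)^2 \<ge> w j l * (y' j - y' l)^2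
        + g^2 * ((if j \<in> S \<and> l \<notin> S then w j l else 0) + (if j \<notin> S \<and> l \<in> S then w j l else 0))"
      if jl: "j \<in> I" "l \<in> I" for j l
    proof -
      have w0: "0 \<le> w j l" using wnn jl .
      consider "j \<in> S" "l \<in> S" | "j \<in> S" "l \<notin> S" | "j \<notin> S" "l \<in> S" | "j \<notin> S" "l \<notin> S" by blast
      then show ?thesis
      proof cases
        case 1
        then show ?thesis using ltu by (simp add: S_def y'_def)
      next
        case 2
        then have e: "y j = u" "y' j = u'" "y' l = y l" "y l \<le> u'" using notS jl ltu by (auto simp: S_def y'_def)
        have "(y j - y l)^2 = (y' j - y' l)^2 + g^2 + 2*g*(u' - y l)"
          unfolding e g_def by (simp add: power2_eq_square algebra_simps)
        moreover have "0 \<le> 2*g*(u' - y l)" using g0 e(4) by simp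
        ultimately have "(y j - y l)^2 \<ge> (y' j - y' l)^2 + g^2" by linarith
        then have "w j l * (y j - y l)^2 \<ge> w j l * ((y' j - y' l)^2 + g^2)" using w0 by (rule mult_left_mono)
        then show ?thesis using 2 by (simp add: algebra_simps)
      next
        case 3
        then have e: "y l = u" "y' l = u'" "y' j = y j" "y j \<le> u'" using notS jl ltu by (auto simp: S_def y'_def)
        have "(y j - y l)^2 = (y' j - y' l)^2 + g^2 + 2*g*(u' - y j)"
          unfolding e g_def by (simp add: power2_eq_square algebra_simps)
        moreover have "0 \<le> 2*g*(u' - y j)" using g0 e(4) by simp
        ultimately have "(y j - y l)^2 \<ge> (y' j - y' l)^2 + g^2" by linarith
        then have "w j l * (y j - y l)^2 \<ge> w j l * ((y' j - y' l)^2 + g^2)" using w0 by (rule mult_left_mono)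
        then show ?thesis using 3 by (simp add: algebra_simps)
      next
        case 4
        then show ?thesis using notS jl by (simp add: y'_def)
      qed
    qed
    have sum1: "(\<Sum>j\<in>I. \<Sum>l\<in>I. (if j \<in> S \<and> l \<notin> S then w j l else 0)) = (\<Sum>j\<in>S. \<Sum>l\<in>I-S. w j l)"
    proof -
      have "(\<Sum>j\<in>I. \<Sum>l\<in>I. (if j \<in> S \<and> l \<notin> S then w j l else 0))
          = (\<Sum>j\<in>I. if j \<in> S then (\<Sum>l\<in>I-S. w j l) else 0)"
        by (intro sum.cong refl) (auto simp: sum.If_cases fin Diff_eq Compl_eq[symmetric])
      also have "\<dots> = (\<Sum>j\<in>S. \<Sum>l\<in>I-S. w j l)"
        using SI fin by (simp add: sum.If_cases Int_absorb1)
      finally show ?thesis .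
    qed
    have sum2: "(\<Sum>j\<in>I. \<Sum>l\<in>I. (if j \<notin> S \<and> l \<in> S then w j l else 0)) = (\<Sum>j\<in>I-S. \<Sum>l\<in>I-(I-S). w j l)"
    proof -
      have "(\<Sum>j\<in>I. \<Sum>l\<in>I. (if j \<notin> S \<and> l \<in> S then w j l else 0))
          = (\<Sum>j\<in>I. if j \<notin> S then (\<Sum>l\<in>S. w j l) else 0)"
        using SI by (intro sum.cong refl) (auto simp: sum.If_cases fin Int_absorb1)
      also have "\<dots> = (\<Sum>j\<in>{j\<in>I. j \<notin> S}. \<Sum>l\<in>S. w j l)"
        using fin by (simp add: sum.inter_filter)
      also have "{j\<in>I. j \<notin> S} = I - S" by auto
      finally have X: "(\<Sum>j\<in>I. \<Sum>l\<in>I. (if j \<notin> S \<and> l \<in> S then w j l else 0)) = (\<Sum>j\<in>I-S. \<Sum>l\<in>S. w j l)" .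
      have "I - (I - S) = S" using SI by auto
      then show ?thesis using X by simp
    qed
    have c1: "\<eta> \<le> (\<Sum>j\<in>S. \<Sum>l\<in>I-S. w j l)" by (rule cut[OF SI Sne SnI])
    have c2: "\<eta> \<le> (\<Sum>j\<in>I-S. \<Sum>l\<in>I-(I-S). w j l)" 
    proof (rule cut)
      show "I - S \<subseteq> I" by blast
      show "I - S \<noteq> {}" by (rule ISne)
      show "I - S \<noteq> I" using Sne SI by blast
    qed
    have Qstep: "Qf I w y \<ge> Qf I w y' + g^2 * (2*\<eta>)"
    proof -
      have B: "(\<Sum>j\<in>I. \<Sum>l\<in>I. w j l * (y' j - y' l)^2
        + g^2 * ((if j \<in> S \<and> l \<notin> S then w j l else 0) + (if j \<notin> S \<and> l \<in> S then w j l else 0))) \<le> Qf I w y"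
        unfolding Qf_def by (intro sum_mono termw) auto
      have A: "(\<Sum>j\<in>I. \<Sum>l\<in>I. w j l * (y' j - y' l)^2
        + g^2 * ((if j \<in> S \<and> l \<notin> S then w j l else 0) + (if j \<notin> S \<and> l \<in> S then w j l else 0)))
         = Qf I w y' + g^2 * ((\<Sum>j\<in>I. \<Sum>l\<in>I. (if j \<in> S \<and> l \<notin> S then w j l else 0))
           + (\<Sum>j\<in>I. \<Sum>l\<in>I. (if j \<notin> S \<and> l \<in> S then w j l else 0)))"
        by (simp add: Qf_def sum.distrib sum_distrib_left distrib_left)
      from A B have "Qf I w y \<ge> Qf I w y' + g^2 * ((\<Sum>j\<in>I. \<Sum>l\<in>I. (if j \<in> S \<and> l \<notin> S then w j l else 0))
           + (\<Sum>j\<in>I. \<Sum>l\<in>I. (if j \<notin> S \<and> l \<in> S then w j l else 0)))" by linarith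
      then have "Qf I w y \<ge> Qf I w y' + g^2 * ((\<Sum>j\<in>S. \<Sum>l\<in>I-S. w j l) + (\<Sum>j\<in>I-S. \<Sum>l\<in>I-(I-S). w j l))"
        using sum1 sum2 by simp
      moreover have "g^2 * (2*\<eta>) \<le> g^2 * ((\<Sum>j\<in>S. \<Sum>l\<in>I-S. w j l) + (\<Sum>j\<in>I-S. \<Sum>l\<in>I-(I-S). w j l))"
        using c1 c2 by (intro mult_left_mono) auto
      ultimately show ?thesis by linarith
    qed
    have Q'0: "0 \<le> Qf I w y'" by (rule Qf_nonneg[OF wnn])
    show ?thesis
    proof (cases "k = 0")
      case True
      then have "card R = 1" using cardR by simp
      then obtain c where "R = {c}" by (meson card_1_singletonE)
      then have "d = 0" by (simp add: d_def u'_def)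
      then show ?thesis using D Qstep Q'0 True by (simp add: algebra_simps)
    next
      case False
      then have kpos: "real k > 0" by simp
      have IH': "2*\<eta>*d^2 \<le> real k * Qf I w y'" using IH by (simp add: d_def u'_def)
      have sq: "real k * (2*\<eta>*(g+d)^2) \<le> (real k + 1) * (2*\<eta>*d^2) + real k * (real k + 1) * (2*\<eta>*g^2)"
      proof -
        have "(real k + 1) * d^2 + real k * (real k + 1) * g^2 - real k * (g+d)^2 = (d - real k * g)^2"
          by (simp add: power2_eq_square algebra_simps)
        then have "real k * (g+d)^2 \<le> (real k + 1) * d^2 + real k * (real k + 1) * g^2"
          using zero_le_power2[of "d - real k * g"] by linarith
        then have "2*\<eta>*(real k * (g+d)^2) \<le> 2*\<eta>*((real k + 1) * d^2 + real k * (real k + 1) * g^2)"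
          using eta by (intro mult_left_mono) auto
        then show ?thesis by (simp add: algebra_simps)
      qed
      have "real k * (2*\<eta>*(g+d)^2) \<le> real k * ((real k + 1) * Qf I w y)"
      proof -
        have "(real k + 1) * (2*\<eta>*d^2) \<le> (real k + 1) * (real k * Qf I w y')"
          using IH' by (intro mult_left_mono) auto
        moreover have "(real k + 1) * (real k * Qf I w y') + real k * (real k + 1) * (2*\<eta>*g^2)
            \<le> real k * ((real k + 1) * Qf I w y)"
        proof -
          have "real k * (real k + 1) * (Qf I w y' + g^2 * (2*\<eta>)) \<le> real k * (real k + 1) * Qf I w y"
            using Qstep kpos by (intro mult_left_mono) auto
          then show ?thesis by (simp add: algebra_simps)
        qed
        ultimately show ?thesis using sq by linarith
      qed
      then have "2*\<eta>*(g+d)^2 \<le> (real k + 1) * Qf I w y" using kpos by simp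
      then show ?thesis using D by (simp add: add.commute)
    qed
  qed
qed

lemma crossing_edge:
  assumes "(s, r) \<in> E\<^sup>*" "s \<in> S" "r \<notin> S"
  shows "\<exists>a b. (a, b) \<in> E \<and> a \<in> S \<and> b \<notin> S"
  using assms
proof (induction rule: rtrancl_induct)
  case base
  then show ?case by simp
next
  case (step y z)
  then show ?case by (cases "y \<in> S") auto
qed

definition Wm :: "nat \<Rightarrow> (nat \<Rightarrow> nat \<Rightarrow> real) \<Rightarrow> nat \<Rightarrow> nat \<Rightarrow> real" where
  "Wm n B j l = (\<Sum>k<n. B k j * B k l)"

lemma Wm_nonneg: "doubly_stochastic n B \<Longrightarrow> j < n \<Longrightarrow> l < n \<Longrightarrow> 0 \<le> Wm n B j l"
  unfolding Wm_def doubly_stochastic_def by (intro sum_nonneg) auto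

lemma Wm_ge: "doubly_stochastic n B \<Longrightarrow> k < n \<Longrightarrow> j < n \<Longrightarrow> l < n \<Longrightarrow> B k j * B k l \<le> Wm n B j l"
  unfolding Wm_def doubly_stochastic_def
  by (intro member_le_sum) auto

lemma cut_W:
  assumes ds: "doubly_stochastic n B" and wg: "weights_on_graph n B"
    and sc: "strongly_connected_graph n B"
    and zb: "\<And>i j. i < n \<Longrightarrow> j < n \<Longrightarrow> B i j > 0 \<Longrightarrow> B i j > \<zeta>"
    and SI: "S \<subseteq> {..<n}" and Sne: "S \<noteq> {}" and SnI: "S \<noteq> {..<n}"
  shows "\<zeta>/2 \<le> (\<Sum>j\<in>S. \<Sum>l\<in>{..<n}-S. Wm n B j l)"
proof -
  obtain s where s: "s \<in> S" using Sne by auto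
  obtain r where r: "r < n" "r \<notin> S" using SI SnI by auto
  have sn: "s < n" using s SI by auto
  have "(s, r) \<in> (graph_edges n B)\<^sup>*" using sc sn r unfolding strongly_connected_graph_def by auto
  then obtain a b where ab: "(a, b) \<in> graph_edges n B" "a \<in> S" "b \<notin> S"
    using crossing_edge s r by metis
  then have abn: "a < n" "b < n" "B b a > 0" by (auto simp: graph_edges_def)
  have Bba: "B b a > \<zeta>" using zb abn by auto
  have "b \<in> in_neighbors n B b" by (simp add: in_neighbors_def)
  then have Bbb0: "B b b > 0" using wg abn unfolding weights_on_graph_def by auto
  then have Bbb: "B b b > \<zeta>" using zb abn by auto
  have nn: "\<And>i j. i < n \<Longrightarrow> j < n \<Longrightarrow> 0 \<le> B i j" using ds unfolding doubly_stochastic_def by auto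
  have row: "(\<Sum>l<n. B b l) = 1" using ds abn unfolding doubly_stochastic_def by auto
  have split: "(\<Sum>l<n. B b l) = (\<Sum>l\<in>S. B b l) + (\<Sum>l\<in>{..<n}-S. B b l)"
    using SI by (metis finite_lessThan sum.subset_diff add.commute)
  have Wnn: "\<And>j l. j \<in> S \<Longrightarrow> l \<in> {..<n}-S \<Longrightarrow> 0 \<le> Wm n B j l"
    using SI by (auto intro!: Wm_nonneg[OF ds])
  have inner_nn: "\<And>j. j \<in> S \<Longrightarrow> 0 \<le> (\<Sum>l\<in>{..<n}-S. Wm n B j l)"
    using Wnn by (intro sum_nonneg) auto
  have finS: "finite S" using SI finite_subset by blast
  show ?thesis
  proof (cases "(\<Sum>l\<in>{..<n}-S. B b l) \<ge> 1/2")
    case True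
    have "\<zeta>/2 \<le> B b a * (\<Sum>l\<in>{..<n}-S. B b l)"
    proof -
      have "\<zeta> * (1/2) \<le> B b a * (\<Sum>l\<in>{..<n}-S. B b l)"
        using Bba True abn(3) by (intro mult_mono) auto
      then show ?thesis by simp
    qed
    also have "\<dots> = (\<Sum>l\<in>{..<n}-S. B b a * B b l)" by (simp add: sum_distrib_left)
    also have "\<dots> \<le> (\<Sum>l\<in>{..<n}-S. Wm n B a l)"
      using abn by (intro sum_mono Wm_ge[OF ds]) auto
    also have "\<dots> \<le> (\<Sum>j\<in>S. \<Sum>l\<in>{..<n}-S. Wm n B j l)"
      using ab(2) finS inner_nn by (intro member_le_sum) auto
    finally show ?thesis .
  next
    case False
    then have half: "(\<Sum>l\<in>S. B b l) \<ge> 1/2" using row split by linarith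
    have "\<zeta>/2 \<le> B b b * (\<Sum>l\<in>S. B b l)"
    proof -
      have "\<zeta> * (1/2) \<le> B b b * (\<Sum>l\<in>S. B b l)"
        using Bbb half Bbb0 by (intro mult_mono) auto
      then show ?thesis by simp
    qed
    also have "\<dots> = (\<Sum>j\<in>S. B b j * B b b)" by (simp add: sum_distrib_left mult.commute)
    also have "\<dots> \<le> (\<Sum>j\<in>S. Wm n B j b)"
      using abn SI by (intro sum_mono Wm_ge[OF ds]) auto
    also have "\<dots> \<le> (\<Sum>j\<in>S. \<Sum>l\<in>{..<n}-S. Wm n B j l)"
    proof (intro sum_mono)
      fix j assume j: "j \<in> S"
      show "Wm n B j b \<le> (\<Sum>l\<in>{..<n}-S. Wm n B j l)"
        using abn ab(3) j Wnn by (intro member_le_sum) auto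
    qed
    finally show ?thesis .
  qed
qed

lemma norm_sq_basis: "norm (x::'d::euclidean_space)^2 = (\<Sum>b\<in>Basis. (x \<bullet> b)^2)"
  unfolding power2_norm_eq_inner by (subst euclidean_inner) (simp add: power2_eq_square)

lemma coord_split:
  fixes e :: "nat \<Rightarrow> 'd::euclidean_space"
  shows "(\<Sum>j\<in>I. \<Sum>l\<in>I. c j l * norm (e j - e l)^2) = (\<Sum>b\<in>Basis. Qf I c (\<lambda>j. e j \<bullet> b))"
proof -
  have "(\<Sum>j\<in>I. \<Sum>l\<in>I. c j l * norm (e j - e l)^2)
      = (\<Sum>j\<in>I. \<Sum>l\<in>I. \<Sum>b\<in>Basis. c j l * (e j \<bullet> b - e l \<bullet> b)^2)"
    by (simp add: norm_sq_basis inner_diff_left sum_distrib_left)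
  also have "\<dots> = (\<Sum>j\<in>I. \<Sum>b\<in>Basis. \<Sum>l\<in>I. c j l * (e j \<bullet> b - e l \<bullet> b)^2)"
    by (intro sum.cong refl sum.swap)
  also have "\<dots> = (\<Sum>b\<in>Basis. \<Sum>j\<in>I. \<Sum>l\<in>I. c j l * (e j \<bullet> b - e l \<bullet> b)^2)"
    by (rule sum.swap)
  finally show ?thesis by (simp add: Qf_def)
qed

lemma scalar_bound:
  assumes ds: "doubly_stochastic n B" and wg: "weights_on_graph n B"
    and sc: "strongly_connected_graph n B"
    and zb: "\<And>i j. i < n \<Longrightarrow> j < n \<Longrightarrow> B i j > 0 \<Longrightarrow> B i j > \<zeta>"
    and z0: "\<zeta> \<ge> 0" and n1: "n \<ge> 1"
  shows "\<zeta> * Qf {..<n} (\<lambda>_ _. 1) y \<le> real n ^ 3 * Qf {..<n} (Wm n B) y"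
proof -
  define D where "D = Max (y ` {..<n}) - Min (y ` {..<n})"
  have "0 \<in> {..<n}" using n1 by simp
  then have ne: "{..<n} \<noteq> {}" by blast
  have card: "card (y ` {..<n}) \<le> Suc (n - 1)"
    using card_image_le[of "{..<n}" y] n1 by simp
  have sp: "2*(\<zeta>/2)*D^2 \<le> real (n-1) * Qf {..<n} (Wm n B) y"
    unfolding D_def
  proof (rule spread_aux[OF _ ne _ _ _ card])
    show "finite {..<n}" by simp
    show "\<And>j l. j \<in> {..<n} \<Longrightarrow> l \<in> {..<n} \<Longrightarrow> 0 \<le> Wm n B j l" using Wm_nonneg[OF ds] by auto
    show "\<And>S. S \<subseteq> {..<n} \<Longrightarrow> S \<noteq> {} \<Longrightarrow> S \<noteq> {..<n} \<Longrightarrow> \<zeta>/2 \<le> (\<Sum>j\<in>S. \<Sum>l\<in>{..<n}-S. Wm n B j l)"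
      by (rule cut_W[OF ds wg sc zb]) auto
    show "0 \<le> \<zeta>/2" using z0 by simp
  qed
  have QW0: "0 \<le> Qf {..<n} (Wm n B) y" by (rule Qf_nonneg) (use Wm_nonneg[OF ds] in auto)
  have each: "(y j - y l)^2 \<le> D^2" if "j < n" "l < n" for j l
  proof -
    have fin: "finite (y ` {..<n})" by simp
    have "y j \<le> Max (y ` {..<n})" "y l \<le> Max (y ` {..<n})" using that fin by auto
    moreover have "Min (y ` {..<n}) \<le> y j" "Min (y ` {..<n}) \<le> y l" using that fin by auto
    ultimately have "\<bar>y j - y l\<bar> \<le> D" unfolding D_def by linarith
    then have "\<bar>y j - y l\<bar>^2 \<le> D^2" by (intro power_mono) auto
    then show ?thesis by simp
  qed
  have Q1: "Qf {..<n} (\<lambda>_ _. 1) y \<le> real n ^ 2 * D^2"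
  proof -
    have "Qf {..<n} (\<lambda>_ _. 1) y \<le> (\<Sum>j<n. \<Sum>l<n. D^2)"
      unfolding Qf_def using each by (intro sum_mono) auto
    also have "\<dots> = real n ^ 2 * D^2" by (simp add: power2_eq_square)
    finally show ?thesis .
  qed
  have "\<zeta> * Qf {..<n} (\<lambda>_ _. 1) y \<le> \<zeta> * (real n ^ 2 * D^2)" using Q1 z0 by (rule mult_left_mono)
  also have "\<dots> = real n ^ 2 * (\<zeta> * D^2)" by simp
  also have "\<dots> \<le> real n ^ 2 * (real (n-1) * Qf {..<n} (Wm n B) y)"
    using sp by (intro mult_left_mono) auto
  also have "\<dots> \<le> real n ^ 2 * (real n * Qf {..<n} (Wm n B) y)"
    using QW0 by (intro mult_left_mono mult_right_mono) auto
  also have "\<dots> = real n ^ 3 * Qf {..<n} (Wm n B) y" by (simp add: power3_eq_cube power2_eq_square)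
  finally show ?thesis .
qed

lemma Wm_row: "doubly_stochastic n B \<Longrightarrow> j < n \<Longrightarrow> (\<Sum>l<n. Wm n B j l) = 1"
proof -
  assume ds: "doubly_stochastic n B" and j: "j < n"
  have "(\<Sum>l<n. Wm n B j l) = (\<Sum>k<n. B k j * (\<Sum>l<n. B k l))"
    unfolding Wm_def by (subst sum.swap) (simp add: sum_distrib_left)
  also have "\<dots> = (\<Sum>k<n. B k j)" using ds unfolding doubly_stochastic_def by simp
  also have "\<dots> = 1" using ds j unfolding doubly_stochastic_def by simp
  finally show ?thesis .
qed

lemma Wm_sym: "Wm n B j l = Wm n B l j"
  unfolding Wm_def by (simp add: mult.commute)

lemma Wm_col: "doubly_stochastic n B \<Longrightarrow> l < n \<Longrightarrow> (\<Sum>j<n. Wm n B j l) = 1"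
proof -
  assume "doubly_stochastic n B" "l < n"
  then have "(\<Sum>j<n. Wm n B l j) = 1" by (rule Wm_row)
  moreover have "(\<Sum>j<n. Wm n B j l) = (\<Sum>j<n. Wm n B l j)" by (intro sum.cong refl Wm_sym)
  ultimately show ?thesis by simp
qed

lemma contraction:
  fixes e :: "nat \<Rightarrow> 'd::euclidean_space"
  assumes ds: "doubly_stochastic n B" and wg: "weights_on_graph n B"
    and sc: "strongly_connected_graph n B"
    and zb: "\<And>i j. i < n \<Longrightarrow> j < n \<Longrightarrow> B i j > 0 \<Longrightarrow> B i j > \<zeta>"
    and z0: "\<zeta> \<ge> 0" and n1: "n \<ge> 1"
    and sum0: "(\<Sum>i<n. e i) = 0"
  shows "(\<Sum>i<n. norm (\<Sum>j<n. B i j *\<^sub>R e j)^2) \<le> (1 - \<zeta> / (real n)^2) * (\<Sum>i<n. norm (e i)^2)"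
proof -
  define E where "E = (\<Sum>i<n. norm (e i)^2)"
  define F where "F = (\<Sum>i<n. norm (\<Sum>j<n. B i j *\<^sub>R e j)^2)"
  define G where "G = (\<Sum>j<n. \<Sum>l<n. Wm n B j l * (e j \<bullet> e l))"
  have id1: "F = G"
  proof -
    have "F = (\<Sum>i<n. \<Sum>j<n. \<Sum>ja<n. B i ja * (B i j * (e j \<bullet> e ja)))"
      unfolding F_def power2_norm_eq_inner
      by (simp add: inner_sum_left inner_sum_right sum_distrib_left mult.assoc inner_commute)
    also have "\<dots> = (\<Sum>i<n. \<Sum>j<n. \<Sum>l<n. B i j * (B i l * (e l \<bullet> e j)))"
      by (intro sum.cong refl sum.swap)
    also have "\<dots> = (\<Sum>i<n. \<Sum>j<n. \<Sum>l<n. B i j * B i l * (e j \<bullet> e l))"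
      by (simp add: mult.assoc inner_commute)
    also have "\<dots> = (\<Sum>j<n. \<Sum>i<n. \<Sum>l<n. B i j * B i l * (e j \<bullet> e l))"
      by (rule sum.swap)
    also have "\<dots> = (\<Sum>j<n. \<Sum>l<n. \<Sum>i<n. B i j * B i l * (e j \<bullet> e l))"
      by (intro sum.cong refl sum.swap)
    also have "\<dots> = G"
      unfolding G_def Wm_def by (simp only: sum_distrib_right)
    finally show ?thesis .
  qed
  have nd: "norm (a - b)^2 = norm a ^2 + norm b ^2 - 2 * (a \<bullet> b)" for a b :: 'd
    by (simp add: power2_norm_eq_inner inner_diff_left inner_diff_right inner_commute)
  have id2: "(\<Sum>j<n. \<Sum>l<n. Wm n B j l * norm (e j - e l)^2) = 2 * E - 2 * G"
  proof -
    have "(\<Sum>j<n. \<Sum>l<n. Wm n B j l * norm (e j - e l)^2)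
        = (\<Sum>j<n. \<Sum>l<n. (Wm n B j l * norm (e j)^2 + Wm n B j l * norm (e l)^2) - 2 * (Wm n B j l * (e j \<bullet> e l)))"
      by (intro sum.cong refl) (simp only: nd right_diff_distrib distrib_left mult.left_commute[of _ 2])
    also have "\<dots> = (\<Sum>j<n. \<Sum>l<n. Wm n B j l * norm (e j)^2) + (\<Sum>j<n. \<Sum>l<n. Wm n B j l * norm (e l)^2) - 2 * G"
      unfolding G_def by (simp only: sum_subtractf sum.distrib sum_distrib_left)
    also have "(\<Sum>j<n. \<Sum>l<n. Wm n B j l * norm (e j)^2) = E"
      unfolding E_def using Wm_row[OF ds] by (simp add: sum_distrib_right[symmetric])
    also have "(\<Sum>j<n. \<Sum>l<n. Wm n B j l * norm (e l)^2) = E"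
      unfolding E_def using Wm_col[OF ds]
      by (subst sum.swap) (simp add: sum_distrib_right[symmetric])
    finally show ?thesis by simp
  qed
  have id3: "(\<Sum>j<n. \<Sum>l<n. 1 * norm (e j - e l)^2) = 2 * real n * E"
  proof -
    have "(\<Sum>j<n. \<Sum>l<n. 1 * norm (e j - e l)^2)
        = (\<Sum>j<n. \<Sum>l<n. (norm (e j)^2 + norm (e l)^2) - 2 * (e j \<bullet> e l))"
      by (intro sum.cong refl) (simp only: nd mult_1)
    also have "\<dots> = (\<Sum>j<n. \<Sum>l<n. norm (e j)^2) + (\<Sum>j<n. \<Sum>l<n. norm (e l)^2) - 2 * (\<Sum>j<n. \<Sum>l<n. e j \<bullet> e l)"
      by (simp only: sum_subtractf sum.distrib sum_distrib_left)
    also have "(\<Sum>j<n. \<Sum>l<n. e j \<bullet> e l) = (\<Sum>j<n. e j) \<bullet> (\<Sum>l<n. e l)"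
      by (subst sum.swap) (simp add: inner_sum_left inner_sum_right)
    also have "(\<Sum>j<n. \<Sum>l<n. norm (e j)^2) = real n * E" unfolding E_def by (simp add: sum_distrib_left)
    also have "(\<Sum>j<n. \<Sum>l<n. norm (e l)^2) = real n * E" unfolding E_def by simp
    finally have "(\<Sum>j<n. \<Sum>l<n. 1 * norm (e j - e l)^2) = real n * E + real n * E - 2 * ((\<Sum>j<n. e j) \<bullet> (\<Sum>l<n. e l))" .
    then show ?thesis using sum0 by simp
  qed
  have key: "\<zeta> * (2 * real n * E) \<le> real n ^ 3 * (2 * E - 2 * G)"
  proof -
    have "\<zeta> * (2 * real n * E) = (\<Sum>b\<in>Basis. \<zeta> * Qf {..<n} (\<lambda>_ _. 1) (\<lambda>j. e j \<bullet> b))"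
      using id3 coord_split[where c="\<lambda>_ _. 1" and I="{..<n}" and e=e] by (simp add: sum_distrib_left)
    also have "\<dots> \<le> (\<Sum>b\<in>Basis. real n ^ 3 * Qf {..<n} (Wm n B) (\<lambda>j. e j \<bullet> b))"
      by (intro sum_mono scalar_bound[OF ds wg sc zb z0 n1]) auto
    also have "\<dots> = real n ^ 3 * (2 * E - 2 * G)"
      using id2 coord_split[where c="Wm n B" and I="{..<n}" and e=e] by (simp flip: sum_distrib_left)
    finally show ?thesis .
  qed
  have npos: "real n > 0" using n1 by simp
  have "\<zeta> * E \<le> real n ^ 2 * (E - G)"
  proof -
    have "2 * real n * (\<zeta> * E) \<le> 2 * real n * (real n ^ 2 * (E - G))"
      using key by (simp add: algebra_simps power3_eq_cube power2_eq_square)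
    then show ?thesis using npos by simp
  qed
  then have "G \<le> E - \<zeta> * E / (real n)^2" using npos by (simp add: field_simps)
  then show ?thesis using id1 by (simp add: F_def E_def algebra_simps)
qed

lemma xavg_lin:
  fixes f g :: "nat \<Rightarrow> 'a::real_vector"
  shows "xavg n (\<lambda>i. p *\<^sub>R f i + q *\<^sub>R g i) = p *\<^sub>R xavg n f + q *\<^sub>R xavg n g"
  unfolding xavg_def by (simp add: sum.distrib scaleR_sum_right[symmetric] algebra_simps)

lemma xavg_cong: "(\<And>i. i < n \<Longrightarrow> f i = g i) \<Longrightarrow> xavg n f = xavg n g"
  unfolding xavg_def by (intro arg_cong[where f="\<lambda>z. (1 / real n) *\<^sub>R z"] sum.cong) auto

lemma sum_dev0:
  fixes x :: "nat \<Rightarrow> 'a::real_vector"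
  assumes "n \<ge> 1"
  shows "(\<Sum>i<n. x i - xavg n x) = 0"
  using assms unfolding xavg_def by (simp add: sum_subtractf sum_constant_scaleR)

lemma xavg_in:
  fixes v :: "nat \<Rightarrow> 'a::real_vector"
  assumes "n \<ge> 1" "convex X" "\<And>i. i < n \<Longrightarrow> v i \<in> X"
  shows "xavg n v \<in> X"
proof -
  have "(\<Sum>i<n. (1 / real n) *\<^sub>R v i) \<in> X"
    using assms by (intro convex_sum) auto
  then show ?thesis unfolding xavg_def by (simp add: scaleR_sum_right)
qed

lemma step_lemma:
  fixes x xn v :: "nat \<Rightarrow> 'd::euclidean_space"
  assumes ds: "doubly_stochastic n B" and wg: "weights_on_graph n B"
    and sc: "strongly_connected_graph n B"
    and zb: "\<And>i j. i < n \<Longrightarrow> j < n \<Longrightarrow> B i j > 0 \<Longrightarrow> B i j > \<zeta>"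
    and z0: "\<zeta> \<ge> 0" and n1: "n \<ge> 1"
    and s0: "0 \<le> s" and ss: "1 - \<zeta> / (real n)^2 \<le> s^2"
    and a0: "0 \<le> a" and a1: "a \<le> 1"
    and cX: "convex X" and vX: "\<And>i. i < n \<Longrightarrow> v i \<in> X"
    and diam: "\<And>y z. y \<in> X \<Longrightarrow> z \<in> X \<Longrightarrow> norm (y - z) \<le> M"
    and xn: "\<And>i. i < n \<Longrightarrow> xn i = (\<Sum>j<n. B i j *\<^sub>R x j) + a *\<^sub>R (v i - (\<Sum>j<n. B i j *\<^sub>R x j))"
  shows "L2_set (\<lambda>i. norm (xn i - xavg n xn)) {..<n}
           \<le> s * L2_set (\<lambda>i. norm (x i - xavg n x)) {..<n} + a * sqrt (real n) * M"
proof -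
  define h where "h i = (\<Sum>j<n. B i j *\<^sub>R x j)" for i
  define e where "e i = x i - xavg n x" for i
  define w where "w i = v i - xavg n v" for i
  have colsum: "\<And>j. j < n \<Longrightarrow> (\<Sum>i<n. B i j) = 1" and rowsum: "\<And>i. i < n \<Longrightarrow> (\<Sum>j<n. B i j) = 1"
    using ds unfolding doubly_stochastic_def by auto
  have sumh: "(\<Sum>i<n. h i) = (\<Sum>j<n. x j)"
  proof -
    have "(\<Sum>i<n. h i) = (\<Sum>j<n. \<Sum>i<n. B i j *\<^sub>R x j)"
      unfolding h_def by (rule sum.swap)
    also have "\<dots> = (\<Sum>j<n. (\<Sum>i<n. B i j) *\<^sub>R x j)" by (simp add: scaleR_sum_left)
    also have "\<dots> = (\<Sum>j<n. x j)" using colsum by simp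
    finally show ?thesis .
  qed
  have avh: "xavg n h = xavg n x" unfolding xavg_def using sumh by simp
  have xn': "xn i = (1 - a) *\<^sub>R h i + a *\<^sub>R v i" if "i < n" for i
    using xn[OF that] unfolding h_def by (simp add: algebra_simps)
  have avxn: "xavg n xn = (1 - a) *\<^sub>R xavg n x + a *\<^sub>R xavg n v"
  proof -
    have "xavg n xn = xavg n (\<lambda>i. (1 - a) *\<^sub>R h i + a *\<^sub>R v i)"
      by (rule xavg_cong) (simp add: xn')
    also have "\<dots> = (1 - a) *\<^sub>R xavg n x + a *\<^sub>R xavg n v" by (simp add: xavg_lin avh)
    finally show ?thesis .
  qed
  have he: "h i - xavg n x = (\<Sum>j<n. B i j *\<^sub>R e j)" if "i < n" for i
  proof -
    have "(\<Sum>j<n. B i j *\<^sub>R e j) = h i - (\<Sum>j<n. B i j) *\<^sub>R xavg n x"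
      unfolding e_def h_def by (simp add: scaleR_diff_right sum_subtractf scaleR_sum_left)
    then show ?thesis using rowsum[OF that] by simp
  qed
  have dev: "xn i - xavg n xn = (1 - a) *\<^sub>R (\<Sum>j<n. B i j *\<^sub>R e j) + a *\<^sub>R w i" if "i < n" for i
  proof -
    have hh: "h i = xavg n x + (\<Sum>j<n. B i j *\<^sub>R e j)" using he[OF that] by (simp add: algebra_simps)
    show ?thesis unfolding xn'[OF that] avxn hh w_def by (simp add: algebra_simps)
  qed
  define NE where "NE = L2_set (\<lambda>i. norm (e i)) {..<n}"
  have NE0: "0 \<le> NE" unfolding NE_def by simp
  have contr: "L2_set (\<lambda>i. norm (\<Sum>j<n. B i j *\<^sub>R e j)) {..<n} \<le> s * NE"
  proof -
    have sum0: "(\<Sum>i<n. e i) = 0" unfolding e_def by (rule sum_dev0[OF n1])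
    have c: "(\<Sum>i<n. norm (\<Sum>j<n. B i j *\<^sub>R e j)^2) \<le> (1 - \<zeta> / (real n)^2) * (\<Sum>i<n. norm (e i)^2)"
      by (rule contraction[OF ds wg sc zb z0 n1 sum0])
    also have "\<dots> \<le> s^2 * (\<Sum>i<n. norm (e i)^2)" using ss by (intro mult_right_mono sum_nonneg) auto
    finally have "sqrt (\<Sum>i<n. norm (\<Sum>j<n. B i j *\<^sub>R e j)^2) \<le> sqrt (s^2 * (\<Sum>i<n. norm (e i)^2))"
      by (rule real_sqrt_le_mono)
    also have "\<dots> = s * NE" unfolding NE_def L2_set_def using s0 by (simp add: real_sqrt_mult)
    finally show ?thesis unfolding L2_set_def .
  qed
  have M0: "0 \<le> M" using diam[OF vX vX, of 0 0] n1 by simp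
  have wM: "L2_set (\<lambda>i. norm (w i)) {..<n} \<le> sqrt (real n) * M"
  proof -
    have avX: "xavg n v \<in> X" by (rule xavg_in[OF n1 cX vX])
    have "L2_set (\<lambda>i. norm (w i)) {..<n} \<le> L2_set (\<lambda>i. M) {..<n}"
      unfolding w_def using diam[OF vX avX] by (intro L2_set_mono) auto
    also have "\<dots> = sqrt (real n) * M" using M0 by (simp add: L2_set_constant)
    finally show ?thesis .
  qed
  have "L2_set (\<lambda>i. norm (xn i - xavg n xn)) {..<n}
      \<le> L2_set (\<lambda>i. (1 - a) * norm (\<Sum>j<n. B i j *\<^sub>R e j) + a * norm (w i)) {..<n}"
  proof (rule L2_set_mono)
    fix i assume "i \<in> {..<n}"
    then have "xn i - xavg n xn = (1 - a) *\<^sub>R (\<Sum>j<n. B i j *\<^sub>R e j) + a *\<^sub>R w i" using dev by auto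
    then show "norm (xn i - xavg n xn) \<le> (1 - a) * norm (\<Sum>j<n. B i j *\<^sub>R e j) + a * norm (w i)"
      using a0 a1 by (metis abs_of_nonneg diff_ge_0_iff_ge norm_scaleR norm_triangle_ineq)
  qed simp
  also have "\<dots> \<le> L2_set (\<lambda>i. (1 - a) * norm (\<Sum>j<n. B i j *\<^sub>R e j)) {..<n} + L2_set (\<lambda>i. a * norm (w i)) {..<n}"
    by (rule L2_set_triangle_ineq)
  also have "\<dots> = (1 - a) * L2_set (\<lambda>i. norm (\<Sum>j<n. B i j *\<^sub>R e j)) {..<n} + a * L2_set (\<lambda>i. norm (w i)) {..<n}"
    using a0 a1 by (simp add: L2_set_right_distrib)
  also have "\<dots> \<le> (1 - a) * (s * NE) + a * (sqrt (real n) * M)"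
    using a0 a1 contr wM by (intro add_mono mult_left_mono) auto
  also have "\<dots> \<le> s * NE + a * sqrt (real n) * M"
  proof -
    have "0 \<le> s * NE" using s0 NE0 by simp
    then have "(1 - a) * (s * NE) \<le> 1 * (s * NE)" using a0 a1 by (intro mult_right_mono) auto
    then have "(1 - a) * (s * NE) \<le> s * NE" by simp
    then show ?thesis by simp
  qed
  finally show ?thesis unfolding NE_def e_def .
qed

lemma sum_recur:
  fixes a b :: "nat \<Rightarrow> real"
  assumes rec: "\<And>t. 1 \<le> t \<Longrightarrow> t < T \<Longrightarrow> a (Suc t) \<le> q * a t + b t"
  shows "1 \<le> m \<Longrightarrow> m \<le> T \<Longrightarrow> (1 - q) * (\<Sum>t=1..m. a t) + q * a m \<le> a 1 + (\<Sum>t\<in>{1..<m}. b t)"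
proof (induction m)
  case 0
  then show ?case by simp
next
  case (Suc m)
  show ?case
  proof (cases "m = 0")
    case True
    then show ?thesis by (simp add: algebra_simps)
  next
    case False
    then have m1: "1 \<le> m" by simp
    have IH: "(1 - q) * (\<Sum>t=1..m. a t) + q * a m \<le> a 1 + (\<Sum>t\<in>{1..<m}. b t)"
      using Suc.IH m1 Suc.prems by simp
    have r: "a (Suc m) \<le> q * a m + b m" using rec m1 Suc.prems by simp
    have "(\<Sum>t=1..Suc m. a t) = (\<Sum>t=1..m. a t) + a (Suc m)" by (simp add: sum.cl_ivl_Suc)
    moreover have "(\<Sum>t\<in>{1..<Suc m}. b t) = (\<Sum>t\<in>{1..<m}. b t) + b m" using m1 by (simp add: sum.atLeastLessThan_Suc)
    ultimately show ?thesis using IH r by (simp add: algebra_simps)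
  qed
qed

lemma dev_sq_le:
  fixes x :: "nat \<Rightarrow> 'a::real_inner"
  assumes "n \<ge> 1"
  shows "(\<Sum>i<n. norm (x i - xavg n x)^2) \<le> (\<Sum>i<n. norm (x i)^2)"
proof -
  define c where "c = xavg n x"
  have sx: "(\<Sum>i<n. x i) = real n *\<^sub>R c" unfolding c_def xavg_def using assms by simp
  have "(\<Sum>i<n. norm (x i - c)^2) = (\<Sum>i<n. norm (x i)^2 - 2 * (x i \<bullet> c) + norm c ^2)"
    by (intro sum.cong refl) (simp add: power2_norm_eq_inner inner_diff_left inner_diff_right inner_commute)
  also have "\<dots> = (\<Sum>i<n. norm (x i)^2) - 2 * ((\<Sum>i<n. x i) \<bullet> c) + real n * norm c ^2"
    by (simp add: sum.distrib sum_subtractf sum_distrib_left inner_sum_left)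
  also have "\<dots> = (\<Sum>i<n. norm (x i)^2) - real n * norm c ^2"
    unfolding sx by (simp add: power2_norm_eq_inner)
  also have "\<dots> \<le> (\<Sum>i<n. norm (x i)^2)" by simp
  finally show ?thesis unfolding c_def .
qed

lemma L2_dev_le:
  fixes x :: "nat \<Rightarrow> 'a::real_inner"
  assumes "n \<ge> 1"
  shows "L2_set (\<lambda>i. norm (x i - xavg n x)) {..<n} \<le> (\<Sum>i<n. norm (x i))"
proof -
  have "L2_set (\<lambda>i. norm (x i - xavg n x)) {..<n} \<le> L2_set (\<lambda>i. norm (x i)) {..<n}"
    unfolding L2_set_def using dev_sq_le[OF assms, of x] by (intro real_sqrt_le_mono) simp
  also have "\<dots> \<le> (\<Sum>i<n. norm (x i))" by (rule L2_set_le_sum) simp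
  finally show ?thesis .
qed

lemma sum_le_L2:
  fixes f :: "nat \<Rightarrow> real"
  assumes "\<And>i. 0 \<le> f i"
  shows "(\<Sum>i<n. f i) \<le> sqrt (real n) * L2_set f {..<n}"
proof -
  have "(\<Sum>i<n. \<bar>f i\<bar> * \<bar>1\<bar>) \<le> L2_set f {..<n} * L2_set (\<lambda>_. 1) {..<n}"
    by (rule L2_set_mult_ineq)
  then show ?thesis using assms by (simp add: L2_set_constant mult.commute)
qed

theorem lemma1:
  fixes n :: nat and A :: "nat \<Rightarrow> nat \<Rightarrow> nat \<Rightarrow> real" and \<zeta> M :: real
    and X :: "'d::euclidean_space set"
    and f :: "nat \<Rightarrow> nat \<Rightarrow> 'd \<Rightarrow> real" and grad :: "nat \<Rightarrow> nat \<Rightarrow> 'd \<Rightarrow> 'd"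
    and \<alpha> :: "nat \<Rightarrow> real" and K :: "nat \<Rightarrow> nat" and T :: nat
    and x xhat gbar ghat v :: "nat \<Rightarrow> nat \<Rightarrow> nat \<Rightarrow> 'd"
  assumes n_pos: "n \<ge> 1"
    \<comment> \<open>(A1)\<close>
    and A1a: "\<zeta> > 0" "\<And>t i j. t \<ge> 1 \<Longrightarrow> i < n \<Longrightarrow> j < n \<Longrightarrow> A t i j > 0 \<Longrightarrow> A t i j > \<zeta>"
    and A1_graph: "\<And>t. t \<ge> 1 \<Longrightarrow> weights_on_graph n (A t)"
    and A1b: "\<And>t. t \<ge> 1 \<Longrightarrow> strongly_connected_graph n (A t)"
    and A1c: "\<And>t. t \<ge> 1 \<Longrightarrow> doubly_stochastic n (A t)"
    \<comment> \<open>(A2)\<close>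
    and A2: "convex X" "compact X" "\<And>y z. y \<in> X \<Longrightarrow> z \<in> X \<Longrightarrow> norm (y - z) \<le> M"
    \<comment> \<open>losses: convex and differentiable with gradient grad\<close>
    and loss_convex: "\<And>t i. t \<ge> 1 \<Longrightarrow> i < n \<Longrightarrow> convex_on X (f t i)"
    and loss_grad: "\<And>t i y. t \<ge> 1 \<Longrightarrow> i < n \<Longrightarrow> y \<in> X \<Longrightarrow>
                       (f t i has_derivative (\<lambda>h. grad t i y \<bullet> h)) (at y)"
    \<comment> \<open>parameters\<close>
    and alpha: "\<And>t. t \<ge> 1 \<Longrightarrow> 0 < \<alpha> t \<and> \<alpha> t \<le> 1"
    and K_mono: "\<And>s t. 1 \<le> s \<Longrightarrow> s \<le> t \<Longrightarrow> K s \<le> K t"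
    and K_ge2: "\<And>t. t \<ge> 1 \<Longrightarrow> K t \<ge> 2"
    and T_ge2: "T \<ge> 2"
    \<comment> \<open>Algorithm DOMFW; x t k i is x_{i,t}^k, so x t 1 i = x_{i,t}\<close>
    and init: "\<And>i. i < n \<Longrightarrow> x 1 1 i \<in> X"
    and step_xhat: "\<And>t k i. 1 \<le> t \<Longrightarrow> t \<le> T \<Longrightarrow> 1 \<le> k \<Longrightarrow> k \<le> K t \<Longrightarrow> i < n \<Longrightarrow>
          xhat t k i = (\<Sum>j<n. A t i j *\<^sub>R x t k j)"
    and step_gbar1: "\<And>t i. 1 \<le> t \<Longrightarrow> t \<le> T \<Longrightarrow> i < n \<Longrightarrow>
          gbar t 1 i = grad t i (xhat t 1 i)"
    and step_gbar: "\<And>t k i. 1 \<le> t \<Longrightarrow> t \<le> T \<Longrightarrow> 2 \<le> k \<Longrightarrow> k \<le> K t \<Longrightarrow> i < n \<Longrightarrow>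
          gbar t k i = ghat t (k - 1) i + grad t i (xhat t k i) - grad t i (xhat t (k - 1) i)"
    and step_ghat: "\<And>t k i. 1 \<le> t \<Longrightarrow> t \<le> T \<Longrightarrow> 1 \<le> k \<Longrightarrow> k \<le> K t \<Longrightarrow> i < n \<Longrightarrow>
          ghat t k i = (\<Sum>j<n. A t i j *\<^sub>R gbar t k j)"
    and step_v: "\<And>t k i. 1 \<le> t \<Longrightarrow> t \<le> T \<Longrightarrow> 1 \<le> k \<Longrightarrow> k \<le> K t \<Longrightarrow> i < n \<Longrightarrow>
          v t k i \<in> X \<and> (\<forall>y\<in>X. inner (v t k i) (ghat t k i) \<le> inner y (ghat t k i))"
    and step_x: "\<And>t k i. 1 \<le> t \<Longrightarrow> t \<le> T \<Longrightarrow> 1 \<le> k \<Longrightarrow> k \<le> K t \<Longrightarrow> i < n \<Longrightarrow>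
          x t (Suc k) i = xhat t k i + \<alpha> t *\<^sub>R (v t k i - xhat t k i)"
    and step_outer: "\<And>t i. 1 \<le> t \<Longrightarrow> t < T \<Longrightarrow> i < n \<Longrightarrow> x (Suc t) 1 i = x t (Suc (K t)) i"
  shows "(\<Sum>t=1..T. \<Sum>i<n. norm (x t 1 i - xavg n (x t 1)))
     \<le> real n * Gamma1 n \<zeta> / (1 - sigma1 n \<zeta> ^ K 1) * (\<Sum>i<n. norm (x 1 1 i))
       + (\<Sum>i<n. norm (x 1 1 i - xavg n (x 1 1)))
       + (real n ^ 2 * M * Gamma1 n \<zeta> / (sigma1 n \<zeta> * (1 - sigma1 n \<zeta>) * (1 - sigma1 n \<zeta> ^ K 1))
          + 2 * real n * M) * (\<Sum>t=1..T. \<alpha> t)"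
proof -
  have n1: "n \<ge> 1" by (rule n_pos)
  have z0: "\<zeta> \<ge> 0" using A1a(1) by simp
  have I0: "0 < n" using n1 by simp
  have t1: "(1::nat) \<ge> 1" by simp
  have z1: "\<zeta> < 1"
  proof -
    have "0 \<in> in_neighbors n (A 1) 0" by (simp add: in_neighbors_def)
    then have "A 1 0 0 > 0" using A1_graph[OF t1] I0 unfolding weights_on_graph_def by auto
    then have g: "A 1 0 0 > \<zeta>" using A1a(2)[OF t1 I0 I0] by simp
    have ds1: "doubly_stochastic n (A 1)" by (rule A1c[OF t1])
    have "A 1 0 0 \<le> (\<Sum>j<n. A 1 0 j)"
      using ds1 I0 unfolding doubly_stochastic_def by (intro member_le_sum) auto
    also have "\<dots> = 1" using ds1 I0 unfolding doubly_stochastic_def by auto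
    finally show ?thesis using g by simp
  qed
  define \<sigma> where "\<sigma> = sigma1 n \<zeta>"
  have nsq: "(real n)^2 \<ge> 1" using n1 by simp
  have r0: "0 \<le> \<zeta> / (4 * (real n)^2)" using z0 by simp
  have r1: "\<zeta> / (4 * (real n)^2) < 1"
  proof -
    have "\<zeta> / (4 * (real n)^2) \<le> \<zeta> / 4" using z0 nsq I0 by (intro divide_left_mono) auto
    then show ?thesis using z1 by simp
  qed
  have rpos: "0 < \<zeta> / (4 * (real n)^2)" using A1a(1) I0 by (intro divide_pos_pos) auto
  have sig0: "0 < \<sigma>" and sig1: "\<sigma> < 1" using r1 rpos by (simp_all add: \<sigma>_def sigma1_def)
  have sigsq: "1 - \<zeta> / (real n)^2 \<le> \<sigma>^2"
  proof -
    define r where "r = \<zeta> / (4 * (real n)^2)"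
    have "\<zeta> / (real n)^2 = 4 * r" unfolding r_def using nsq by (simp add: field_simps)
    moreover have "\<sigma> = 1 - r" unfolding r_def \<sigma>_def sigma1_def by simp
    moreover have "(1 - r)^2 = 1 - 2*r + r^2" by (simp add: power2_eq_square algebra_simps)
    moreover have "0 \<le> r^2" by simp
    ultimately show ?thesis using r0 by simp
  qed
  have Gam: "Gamma1 n \<zeta> = 1 / \<sigma>" unfolding Gamma1_def \<sigma>_def sigma1_def by (simp add: inverse_eq_divide)
  have M0: "0 \<le> M"
  proof -
    have "v 1 1 0 \<in> X" using step_v[of 1 1 0] K_ge2[OF t1] T_ge2 I0 by auto
    then show ?thesis using A2(3)[of "v 1 1 0" "v 1 1 0"] by simp
  qed
  define N where "N t k = L2_set (\<lambda>i. norm (x t k i - xavg n (x t k))) {..<n}" for t k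
  have N0: "0 \<le> N t k" for t k unfolding N_def by simp
  define c where "c t = \<alpha> t * sqrt (real n) * M" for t
  have c0: "1 \<le> t \<Longrightarrow> 0 \<le> c t" for t unfolding c_def using alpha[of t] M0 by simp
  have step: "N t (Suc k) \<le> \<sigma> * N t k + c t"
    if t: "1 \<le> t" "t \<le> T" and k: "1 \<le> k" "k \<le> K t" for t k
    unfolding N_def c_def
  proof (rule step_lemma[where B="A t" and \<zeta>=\<zeta> and X=X and v="v t k"])
    show "doubly_stochastic n (A t)" by (rule A1c[OF t(1)])
    show "weights_on_graph n (A t)" by (rule A1_graph[OF t(1)])
    show "strongly_connected_graph n (A t)" by (rule A1b[OF t(1)])
    show "\<And>i j. i < n \<Longrightarrow> j < n \<Longrightarrow> A t i j > 0 \<Longrightarrow> A t i j > \<zeta>" by (rule A1a(2)[OF t(1)])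
    show "\<zeta> \<ge> 0" by (rule z0)
    show "n \<ge> 1" by (rule n1)
    show "0 \<le> \<sigma>" using sig0 by simp
    show "1 - \<zeta> / (real n)^2 \<le> \<sigma>^2" by (rule sigsq)
    show "0 \<le> \<alpha> t" "\<alpha> t \<le> 1" using alpha[OF t(1)] by auto
    show "convex X" by (rule A2(1))
    show "\<And>i. i < n \<Longrightarrow> v t k i \<in> X" using step_v t k by blast
    show "\<And>y z. y \<in> X \<Longrightarrow> z \<in> X \<Longrightarrow> norm (y - z) \<le> M" by (rule A2(3))
    show "\<And>i. i < n \<Longrightarrow> x t (Suc k) i = (\<Sum>j<n. A t i j *\<^sub>R x t k j) + \<alpha> t *\<^sub>R (v t k i - (\<Sum>j<n. A t i j *\<^sub>R x t k j))"
      using step_x[OF t k] step_xhat[OF t k] by simp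
  qed
  have round: "k \<le> K t \<Longrightarrow> N t (Suc k) \<le> \<sigma>^k * N t 1 + c t / (1 - \<sigma>)"
    if t: "1 \<le> t" "t \<le> T" for t k
  proof (induction k)
    case 0
    have "0 \<le> c t / (1 - \<sigma>)" using c0[OF t(1)] sig1 by simp
    then show ?case by simp
  next
    case (Suc k)
    have "N t (Suc (Suc k)) \<le> \<sigma> * N t (Suc k) + c t" using step[OF t, of "Suc k"] Suc.prems by simp
    also have "\<dots> \<le> \<sigma> * (\<sigma>^k * N t 1 + c t / (1 - \<sigma>)) + c t"
      using Suc.IH Suc.prems sig0 by (intro add_right_mono mult_left_mono) auto
    also have "\<dots> = \<sigma>^(Suc k) * N t 1 + c t / (1 - \<sigma>)"
      using sig1 by (simp add: field_simps)
    finally show ?case .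
  qed
  define q where "q = \<sigma>^(K 1)"
  have q0: "0 \<le> q" and q1: "q < 1"
    unfolding q_def using sig0 sig1 K_ge2[OF t1] by (simp_all add: power_less_one_iff)
  define b where "b t = c t / (1 - \<sigma>)" for t
  have rec: "N (Suc t) 1 \<le> q * N t 1 + b t" if t: "1 \<le> t" "t < T" for t
  proof -
    have "xavg n (x (Suc t) 1) = xavg n (x t (Suc (K t)))"
      by (rule xavg_cong) (use step_outer t in auto)
    then have "N (Suc t) 1 = N t (Suc (K t))"
      unfolding N_def using step_outer[OF t] by (intro L2_set_cong) auto
    also have "\<dots> \<le> \<sigma>^(K t) * N t 1 + b t" unfolding b_def using round[of t "K t"] t by simp
    also have "\<dots> \<le> q * N t 1 + b t"
    proof -
      have "\<sigma>^(K t) \<le> \<sigma>^(K 1)" using sig0 sig1 K_mono[of 1 t] t by (intro power_decreasing) auto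
      then show ?thesis unfolding q_def using N0 by (intro add_right_mono mult_right_mono) auto
    qed
    finally show ?thesis .
  qed
  have T1: "1 \<le> T" using T_ge2 by simp
  have SR: "(1 - q) * (\<Sum>t=1..T. N t 1) + q * N T 1 \<le> N 1 1 + (\<Sum>t\<in>{1..<T}. b t)"
    by (rule sum_recur[where a="\<lambda>t. N t 1" and b=b and q=q, OF rec T1 order_refl]) auto
  have b0: "0 \<le> b t" if "1 \<le> t" for t unfolding b_def using c0[OF that] sig1 by simp
  have "(\<Sum>t\<in>{1..<T}. b t) \<le> (\<Sum>t=1..T. b t)"
    using b0 by (intro sum_mono2) auto
  then have SR2: "(1 - q) * (\<Sum>t=1..T. N t 1) \<le> N 1 1 + (\<Sum>t=1..T. b t)"
    using SR q0 N0[of T 1] by (smt (verit) mult_nonneg_nonneg)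
  define P where "P = (\<Sum>i<n. norm (x 1 1 i))"
  define S\<alpha> where "S\<alpha> = (\<Sum>t=1..T. \<alpha> t)"
  have P0: "0 \<le> P" unfolding P_def by (simp add: sum_nonneg)
  have Sa0: "0 \<le> S\<alpha>" unfolding S\<alpha>_def using alpha by (intro sum_nonneg) (simp add: less_imp_le)
  have N11: "N 1 1 \<le> P" unfolding N_def P_def by (rule L2_dev_le[OF n1])
  have sumb: "(\<Sum>t=1..T. b t) = sqrt (real n) * M / (1 - \<sigma>) * S\<alpha>"
    unfolding b_def c_def S\<alpha>_def by (simp add: sum_divide_distrib sum_distrib_left sum_distrib_right algebra_simps)
  have LHS1: "(\<Sum>t=1..T. \<Sum>i<n. norm (x t 1 i - xavg n (x t 1))) \<le> sqrt (real n) * (\<Sum>t=1..T. N t 1)"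
    unfolding N_def sum_distrib_left by (intro sum_mono sum_le_L2) simp
  have sqn: "sqrt (real n) \<le> real n"
  proof -
    have s1: "1 \<le> sqrt (real n)" using n1 by simp
    have "sqrt (real n) * 1 \<le> sqrt (real n) * sqrt (real n)" using s1 by (intro mult_left_mono) auto
    then show ?thesis by simp
  qed
  have Q: "(\<Sum>t=1..T. N t 1) \<le> (P + sqrt (real n) * M / (1 - \<sigma>) * S\<alpha>) / (1 - q)"
    using SR2 N11 sumb q1 by (simp add: field_simps)
  have "(\<Sum>t=1..T. \<Sum>i<n. norm (x t 1 i - xavg n (x t 1)))
      \<le> sqrt (real n) * ((P + sqrt (real n) * M / (1 - \<sigma>) * S\<alpha>) / (1 - q))"
  proof -
    have "sqrt (real n) * (\<Sum>t=1..T. N t 1) \<le> sqrt (real n) * ((P + sqrt (real n) * M / (1 - \<sigma>) * S\<alpha>) / (1 - q))"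
      using Q by (intro mult_left_mono) auto
    then show ?thesis using LHS1 by linarith
  qed
  also have "\<dots> = sqrt (real n) / (1 - q) * P + real n * M / ((1 - \<sigma>) * (1 - q)) * S\<alpha>"
  proof -
    have d1: "1 - q \<noteq> 0" and d2: "1 - \<sigma> \<noteq> 0" using q1 sig1 by auto
    have e: "sqrt (real n) * sqrt (real n) = real n" by simp
    have "sqrt (real n) * ((P + sqrt (real n) * M / (1 - \<sigma>) * S\<alpha>) / (1 - q))
       = (sqrt (real n) * P + (sqrt (real n) * sqrt (real n)) * M / (1 - \<sigma>) * S\<alpha>) / (1 - q)"
      by (simp add: algebra_simps add_divide_distrib)
    also have "\<dots> = (sqrt (real n) * P + real n * M / (1 - \<sigma>) * S\<alpha>) / (1 - q)" by (simp only: e)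
    also have "\<dots> = sqrt (real n) / (1 - q) * P + real n * M / ((1 - \<sigma>) * (1 - q)) * S\<alpha>"
      by (simp add: add_divide_distrib divide_divide_eq_left)
    finally show ?thesis .
  qed
  also have "\<dots> \<le> real n * (1 / \<sigma>) / (1 - q) * P + real n ^ 2 * M * (1 / \<sigma>) / (\<sigma> * (1 - \<sigma>) * (1 - q)) * S\<alpha>"
  proof (rule add_mono)
    have "sqrt (real n) \<le> real n * (1 / \<sigma>)"
    proof -
      have "1 \<le> 1 / \<sigma>" using sig0 sig1 by simp
      then have "real n * 1 \<le> real n * (1 / \<sigma>)" by (intro mult_left_mono) auto
      then show ?thesis using sqn by simp
    qed
    then show "sqrt (real n) / (1 - q) * P \<le> real n * (1 / \<sigma>) / (1 - q) * P"
      using q1 P0 by (intro mult_right_mono divide_right_mono) auto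
    have "real n \<le> real n ^ 2 * (1 / \<sigma>) / \<sigma>"
    proof -
      have "\<sigma> * \<sigma> \<le> 1 * 1" using sig0 sig1 by (intro mult_mono) auto
      then have "1 \<le> (1 / \<sigma>) / \<sigma>" using sig0 by (simp add: field_simps)
      moreover have "real n \<le> real n ^ 2" using n1 by (simp add: power2_eq_square)
      ultimately have "real n * 1 \<le> real n ^ 2 * ((1 / \<sigma>) / \<sigma>)" using n1
        by (intro mult_mono) auto
      then show ?thesis by simp
    qed
    then have "real n * M \<le> real n ^ 2 * (1 / \<sigma>) / \<sigma> * M" using M0 by (intro mult_right_mono) auto
    then have "real n * M / ((1 - \<sigma>) * (1 - q)) \<le> real n ^ 2 * (1 / \<sigma>) / \<sigma> * M / ((1 - \<sigma>) * (1 - q))"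
      using sig1 q1 by (intro divide_right_mono) auto
    also have "\<dots> = real n ^ 2 * M * (1 / \<sigma>) / (\<sigma> * (1 - \<sigma>) * (1 - q))" by (simp add: field_simps)
    finally show "real n * M / ((1 - \<sigma>) * (1 - q)) * S\<alpha> \<le> real n ^ 2 * M * (1 / \<sigma>) / (\<sigma> * (1 - \<sigma>) * (1 - q)) * S\<alpha>"
      using Sa0 by (intro mult_right_mono) auto
  qed
  also have "\<dots> \<le> real n * (1 / \<sigma>) / (1 - q) * P + (\<Sum>i<n. norm (x 1 1 i - xavg n (x 1 1)))
      + (real n ^ 2 * M * (1 / \<sigma>) / (\<sigma> * (1 - \<sigma>) * (1 - q)) + 2 * real n * M) * S\<alpha>"
  proof -
    have "0 \<le> (\<Sum>i<n. norm (x 1 1 i - xavg n (x 1 1)))" by (simp add: sum_nonneg)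
    moreover have "0 \<le> 2 * real n * M * S\<alpha>" using M0 Sa0 by simp
    ultimately show ?thesis by (simp add: algebra_simps)
  qed
  finally show ?thesis unfolding P_def S\<alpha>_def q_def \<sigma>_def Gam[unfolded \<sigma>_def] .
qed

end
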